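(* In the protocol IT-HS described in the context, with $f<\frac{n}{3}$ Byzantine parties, if two nonfaulty parties send the messages $\langle key1,val,v\rangle$ and $\langle key1,val',v\rangle$ (for the same view $v$), then $val=val'$.
   Context: Model. $n$ parties with inputs $x_i$; up to $f$ Byzantine (arbitrary behaviour), the rest nonfaulty; authenticated point-to-point channels; partial synchrony: after an unknown time GST every message arrives within known $\Delta$ time and clocks are synchronized, before GST delays are arbitrary but finite. Protocol IT-HS (party $i$). Variables: $lock\gets 0$, $lock\_val\gets x_i$; $key3\gets 0$, $key3\_val\gets x_i$; $key2\gets 0$, $key2\_val\gets x_i$, $prev\_key2\gets -1$; $key1\gets 0$, $key1\_val\gets x_i$, $prev\_key1\gets -1$; $view\gets 0$; $highest\_request[j]\gets 0$, $highest\_abort[j]\gets 0$ for $j\in[n]$. "Send-upon-join $m$": for each $j$, send $m$ to $j$ as soon as $highest\_request[j]$ equals the current view. Background: (B1) on $\langle request,v\rangle$ from $j$, $highest\_request[j]\gets\max(highest\_request[j],v)$. (B2) on $\langle done,val\rangle$ from $f+1$ parties with the same $val$: if no $done$ sent yet, send $\langle done,val\rangle$ to all. (B3) on $\langle done,val\rangle$ from $n-f$ parties with the same $val$: decide $val$, terminate. (B4) on $\langle abort,v\rangle$ from $j$ with $highest\_abort[j]<v$: $highest\_abort[j]\gets v$; $u\gets$ the $(f+1)$-th largest entry of $highest\_abort$; if $u>highest\_abort[i]$ send $\langle abort,u\rangle$ to all and set $highest\_abort[i]\gets u$; $w\gets$ the $(n-f)$-th largest entry; if $w\ge view$ set $view\gets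 w+1$. Views: for each value $v$ of $view$, while $view=v$: fresh per-view state; after $11\Delta$ local time send $\langle abort,v\rangle$ to all; ignore other views' messages except $abort$, $done$, $request$; primary $p=(v\bmod n)+1$. View change: send $\langle request,v\rangle$ to all; when $highest\_request[p]=v$ send $\langle suggest,key3,key3\_val,key2,key2\_val,prev\_key2,v\rangle$ to $p$; send-upon-join $\langle proof,key1,key1\_val,prev\_key1,v\rangle$. If $i=p$: upon first $\langle suggest,k3,v3,k2,v2,pk2,v\rangle$ from a party, if $pk2<k2<v$ add $(k2,v2,pk2)$ to $key2\_proofs$; if $k3=0$ add $(k3,v3)$ to $suggestions$; else if $k3<v$ add $(k3,v3)$ as soon as at least $f+1$ triples $(k,w,pk)\in key2\_proofs$ satisfy $k3\le pk$ or ($k3\le k$ and $w=v3$); once $|suggestions|\ge n-f$, send-upon-join $\langle propose,k,w,v\rangle$ for $(k,w)\in suggestions$ with maximal $k$. Message processing: upon first $\langle proof,k1,v1,pk1,v\rangle$ from a party, if $v>k1>pk1$ add $(k1,v1,pk1)$ to $proofs$. Upon first $\langle propose,key,val,v\rangle$ from $p$: if $lock=0$ or $val=lock\_val$, send-upon-join $\langle echo,val,v\rangle$; else if $v>key\ge lock$, then once at least $f+1$ triples $(k,w,pk)\in proofs$ satisfy $lock\le pk$ or ($lock\le k$ and $w\ne lock\_val$), send-upon-join $\langle echo,val,v\rangle$. Upon $\langle echo,val,v\rangle$ from $n-f$ parties with the same $val$: send-upon-join $\langle key1,val,v\rangle$; if $key1\_val\ne val$ then $prev\_key1\gets key1$,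 $key1\_val\gets val$; $key1\gets v$. Upon $\langle key1,val,v\rangle$ from $n-f$ parties (same $val$): send-upon-join $\langle key2,val,v\rangle$; if $key2\_val\ne val$ then $prev\_key2\gets key2$, $key2\_val\gets val$; $key2\gets v$. Upon $\langle key2,val,v\rangle$ from $n-f$ (same $val$): send-upon-join $\langle key3,val,v\rangle$; $key3\gets v$, $key3\_val\gets val$. Upon $\langle key3,val,v\rangle$ from $n-f$ (same $val$): send-upon-join $\langle lock,val,v\rangle$; $lock\gets v$, $lock\_val\gets val$. Upon $\langle lock,val,v\rangle$ from $n-f$ (same $val$): if no $done$ sent yet, send $\langle done,val\rangle$ to all. *)

theory Defs
  imports Main
begin

text \<open>Views and keys are integers (so that the initial prev-keys can be -1).
Timing (partial synchrony, Delta, GST) is abstracted: message delays and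
timer expiry are arbitrary (nondeterministic), which only enlarges the set of
executions; the safety lemma is stated over all of them.\<close>

datatype 'v msg =
    Request int
  | Done 'v
  | Abort int
  | Suggest int 'v int 'v int int   \<comment> \<open>key3 key3_val key2 key2_val prev_key2 view\<close>
  | Proof int 'v int int            \<comment> \<open>key1 key1_val prev_key1 view\<close>
  | Propose int 'v int              \<comment> \<open>key val view\<close>
  | Echo 'v int
  | Key1 'v int
  | Key2 'v int
  | Key3 'v int
  | Lock 'v int

fun msg_view :: "'v msg \<Rightarrow> int option" where
  "msg_view (Suggest _ _ _ _ _ v) = Some v"
| "msg_view (Proof _ _ _ v) = Some v"
| "msg_view (Propose _ _ v) = Some v"
| "msg_view (Echo _ v) = Some v"
| "msg_view (Key1 _ v) = Some v"
| "msg_view (Key2 _ v) = Some v"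
| "msg_view (Key3 _ v) = Some v"
| "msg_view (Lock _ v) = Some v"
| "msg_view _ = None"

record 'v pstate =
  inp :: 'v
  lock :: int
  lock_val :: 'v
  key3 :: int
  key3_val :: 'v
  key2 :: int
  key2_val :: 'v
  prev_key2 :: int
  key1 :: int
  key1_val :: 'v
  prev_key1 :: int
  view :: int
  hreq :: "nat \<Rightarrow> int"
  habort :: "nat \<Rightarrow> int"
  done_sent :: bool
  decision :: "'v option"
  dones :: "(nat \<times> 'v) set"
  timer_fired :: bool
  suggest_sent :: bool
  rcvd :: "(nat \<times> 'v msg) set"
  key2_proofs :: "nat \<Rightarrow> (int \<times> 'v \<times> int) option"
  sugg_pending :: "nat \<Rightarrow> (int \<times> 'v) option"
  suggestions :: "nat \<Rightarrow> (int \<times> 'v) option"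
  propose_sent :: bool
  proofs :: "nat \<Rightarrow> (int \<times> 'v \<times> int) option"
  echo_pending :: "'v option"
  echo_done :: bool
  k1_done :: "'v set"
  k2_done :: "'v set"
  k3_done :: "'v set"
  lock_done :: "'v set"
  join :: "'v msg set"
  join_sent :: "(nat \<times> 'v msg) set"

definition parties :: "nat \<Rightarrow> nat set" where
  "parties n = {1..n}"

definition primary :: "nat \<Rightarrow> int \<Rightarrow> nat" where
  "primary n v = nat (v mod int n) + 1"

definition to_all :: "nat \<Rightarrow> 'v msg \<Rightarrow> (nat \<times> 'v msg) set" where
  "to_all n m = {(r, m) | r. r \<in> parties n}"

definition kth_largest :: "nat \<Rightarrow> (nat \<Rightarrow> int) \<Rightarrow> nat \<Rightarrow> int" where
  "kth_largest n h k = rev (sort (map h [1..<Suc n])) ! (k - 1)"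

definition enter_view :: "nat \<Rightarrow> 'v pstate \<Rightarrow> int \<Rightarrow> 'v pstate \<times> (nat \<times> 'v msg) set" where
  "enter_view n s w =
    (s\<lparr>view := w, timer_fired := False, suggest_sent := False, rcvd := {},
        key2_proofs := (\<lambda>_. None), sugg_pending := (\<lambda>_. None), suggestions := (\<lambda>_. None),
        propose_sent := False, proofs := (\<lambda>_. None), echo_pending := None, echo_done := False,
        k1_done := {}, k2_done := {}, k3_done := {}, lock_done := {},
        join := {Proof (key1 s) (key1_val s) (prev_key1 s) w}, join_sent := {}\<rparr>,
     to_all n (Request w))"

definition base_state :: "'v \<Rightarrow> 'v pstate" where
  "base_state x = \<lparr>inp = x, lock = 0, lock_val = x, key3 = 0, key3_val = x,
     key2 = 0, key2_val = x, prev_key2 = -1, key1 = 0, key1_val = x, prev_key1 = -1,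
     view = 0, hreq = (\<lambda>_. 0), habort = (\<lambda>_. 0), done_sent = False, decision = None,
     dones = {}, timer_fired = False, suggest_sent = False, rcvd = {},
     key2_proofs = (\<lambda>_. None), sugg_pending = (\<lambda>_. None), suggestions = (\<lambda>_. None),
     propose_sent = False, proofs = (\<lambda>_. None), echo_pending = None, echo_done = False,
     k1_done = {}, k2_done = {}, k3_done = {}, lock_done = {}, join = {}, join_sent = {}\<rparr>"

definition has_suggest_from :: "'v pstate \<Rightarrow> nat \<Rightarrow> bool" where
  "has_suggest_from s j = (\<exists>a b c d e g. (j, Suggest a b c d e g) \<in> rcvd s)"
definition has_proof_from :: "'v pstate \<Rightarrow> nat \<Rightarrow> bool" where
  "has_proof_from s j = (\<exists>a b c g. (j, Proof a b c g) \<in> rcvd s)"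
definition has_propose_from :: "'v pstate \<Rightarrow> nat \<Rightarrow> bool" where
  "has_propose_from s j = (\<exists>a b g. (j, Propose a b g) \<in> rcvd s)"

fun process_view_msg :: "nat \<Rightarrow> nat \<Rightarrow> nat \<Rightarrow> 'v msg \<Rightarrow> 'v pstate \<Rightarrow> 'v pstate \<times> (nat \<times> 'v msg) set" where
  "process_view_msg n i j (Suggest k3 v3 k2 v2 pk2 v) s =
     (if i = primary n v \<and> \<not> has_suggest_from s j then
        (let s1 = (if pk2 < k2 \<and> k2 < v then s\<lparr>key2_proofs := (key2_proofs s)(j := Some (k2, v2, pk2))\<rparr> else s);
             s2 = (if k3 = 0 then s1\<lparr>suggestions := (suggestions s1)(j := Some (k3, v3))\<rparr>
                   else if k3 < v then s1\<lparr>sugg_pending := (sugg_pending s1)(j := Some (k3, v3))\<rparr>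
                   else s1)
         in (s2, {}))
      else (s, {}))"
| "process_view_msg n i j (Proof k1 v1 pk1 v) s =
     (if \<not> has_proof_from s j \<and> v > k1 \<and> k1 > pk1
      then (s\<lparr>proofs := (proofs s)(j := Some (k1, v1, pk1))\<rparr>, {}) else (s, {}))"
| "process_view_msg n i j (Propose key val v) s =
     (if j = primary n v \<and> \<not> has_propose_from s j then
        (if lock s = 0 \<or> val = lock_val s
         then (s\<lparr>join := insert (Echo val v) (join s), echo_done := True\<rparr>, {})
         else if v > key \<and> key \<ge> lock s
         then (s\<lparr>echo_pending := Some val\<rparr>, {})
         else (s, {}))
      else (s, {}))"
| "process_view_msg n i j m s = (s, {})"

definition deliver :: "nat \<Rightarrow> nat \<Rightarrow> nat \<Rightarrow> nat \<Rightarrow> 'v msg \<Rightarrow> 'v pstate \<Rightarrow> 'v pstate \<times> (nat \<times> 'v msg) set" where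
  "deliver n f i j m s =
    (case m of
       Request v \<Rightarrow> (s\<lparr>hreq := (hreq s)(j := max (hreq s j) v)\<rparr>, {})
     | Done val \<Rightarrow> (s\<lparr>dones := insert (j, val) (dones s)\<rparr>, {})
     | Abort v \<Rightarrow>
         (if habort s j < v then
            (let h1 = (habort s)(j := v);
                 u = kth_largest n h1 (f + 1);
                 h2 = (if u > h1 i then h1(i := u) else h1);
                 out1 = (if u > h1 i then to_all n (Abort u) else {});
                 w = kth_largest n h2 (n - f);
                 s1 = s\<lparr>habort := h2\<rparr>
             in if w \<ge> view s then (fst (enter_view n s1 (w + 1)), out1 \<union> snd (enter_view n s1 (w + 1)))
                else (s1, out1))
          else (s, {}))
     | _ \<Rightarrow>
         (if msg_view m = Some (view s)
          then (let (s1, out) = process_view_msg n i j m s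
                in (s1\<lparr>rcvd := insert (j, m) (rcvd s1)\<rparr>, out))
          else (s, {})))"

definition count_parties :: "nat \<Rightarrow> (nat \<Rightarrow> bool) \<Rightarrow> nat" where
  "count_parties n P = card {j \<in> parties n. P j}"

text \<open>Internal (triggered) actions of party i.  A party performs all enabled
internal actions before it handles a new delivery or timer event.\<close>
inductive istep :: "nat \<Rightarrow> nat \<Rightarrow> nat \<Rightarrow> 'v pstate \<Rightarrow> 'v pstate \<Rightarrow> (nat \<times> 'v msg) set \<Rightarrow> bool"
  for n f i where
  suggest:
    "\<lbrakk>\<not> suggest_sent s; hreq s (primary n (view s)) = view s\<rbrakk> \<Longrightarrow>
     istep n f i s (s\<lparr>suggest_sent := True\<rparr>)
       {(primary n (view s), Suggest (key3 s) (key3_val s) (key2 s) (key2_val s) (prev_key2 s) (view s))}"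
| accept_suggestion:
    "\<lbrakk>i = primary n (view s); sugg_pending s j = Some (k3, v3);
      count_parties n (\<lambda>l. \<exists>k w pk. key2_proofs s l = Some (k, w, pk) \<and> (k3 \<le> pk \<or> (k3 \<le> k \<and> w = v3))) \<ge> f + 1\<rbrakk> \<Longrightarrow>
     istep n f i s (s\<lparr>suggestions := (suggestions s)(j := Some (k3, v3)),
                      sugg_pending := (sugg_pending s)(j := None)\<rparr>) {}"
| propose:
    "\<lbrakk>i = primary n (view s); \<not> propose_sent s;
      count_parties n (\<lambda>l. suggestions s l \<noteq> None) \<ge> n - f;
      suggestions s j = Some (k, w);
      \<forall>l k' w'. suggestions s l = Some (k', w') \<longrightarrow> k' \<le> k\<rbrakk> \<Longrightarrow>
     istep n f i s (s\<lparr>propose_sent := True, join := insert (Propose k w (view s)) (join s)\<rparr>) {}"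
| pending_echo:
    "\<lbrakk>echo_pending s = Some val;
      count_parties n (\<lambda>l. \<exists>k w pk. proofs s l = Some (k, w, pk) \<and>
                            (lock s \<le> pk \<or> (lock s \<le> k \<and> w \<noteq> lock_val s))) \<ge> f + 1\<rbrakk> \<Longrightarrow>
     istep n f i s (s\<lparr>echo_pending := None, echo_done := True,
                      join := insert (Echo val (view s)) (join s)\<rparr>) {}"
| key1_step:
    "\<lbrakk>val \<notin> k1_done s; count_parties n (\<lambda>l. (l, Echo val (view s)) \<in> rcvd s) \<ge> n - f\<rbrakk> \<Longrightarrow>
     istep n f i s (s\<lparr>k1_done := insert val (k1_done s),
                      join := insert (Key1 val (view s)) (join s),
                      prev_key1 := (if key1_val s \<noteq> val then key1 s else prev_key1 s),
                      key1_val := val, key1 := view s\<rparr>) {}"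
| key2_step:
    "\<lbrakk>val \<notin> k2_done s; count_parties n (\<lambda>l. (l, Key1 val (view s)) \<in> rcvd s) \<ge> n - f\<rbrakk> \<Longrightarrow>
     istep n f i s (s\<lparr>k2_done := insert val (k2_done s),
                      join := insert (Key2 val (view s)) (join s),
                      prev_key2 := (if key2_val s \<noteq> val then key2 s else prev_key2 s),
                      key2_val := val, key2 := view s\<rparr>) {}"
| key3_step:
    "\<lbrakk>val \<notin> k3_done s; count_parties n (\<lambda>l. (l, Key2 val (view s)) \<in> rcvd s) \<ge> n - f\<rbrakk> \<Longrightarrow>
     istep n f i s (s\<lparr>k3_done := insert val (k3_done s),
                      join := insert (Key3 val (view s)) (join s),
                      key3 := view s, key3_val := val\<rparr>) {}"
| lock_step:
    "\<lbrakk>val \<notin> lock_done s; count_parties n (\<lambda>l. (l, Key3 val (view s)) \<in> rcvd s) \<ge> n - f\<rbrakk> \<Longrightarrow>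
     istep n f i s (s\<lparr>lock_done := insert val (lock_done s),
                      join := insert (Lock val (view s)) (join s),
                      lock := view s, lock_val := val\<rparr>) {}"
| lock_quorum_done:
    "\<lbrakk>\<not> done_sent s; count_parties n (\<lambda>l. (l, Lock val (view s)) \<in> rcvd s) \<ge> n - f\<rbrakk> \<Longrightarrow>
     istep n f i s (s\<lparr>done_sent := True\<rparr>) (to_all n (Done val))"
| join_send:
    "\<lbrakk>m \<in> join s; j \<in> parties n; hreq s j = view s; (j, m) \<notin> join_sent s\<rbrakk> \<Longrightarrow>
     istep n f i s (s\<lparr>join_sent := insert (j, m) (join_sent s)\<rparr>) {(j, m)}"
| done_relay:
    "\<lbrakk>\<not> done_sent s; count_parties n (\<lambda>l. (l, val) \<in> dones s) \<ge> f + 1\<rbrakk> \<Longrightarrow>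
     istep n f i s (s\<lparr>done_sent := True\<rparr>) (to_all n (Done val))"
| decide:
    "\<lbrakk>decision s = None; count_parties n (\<lambda>l. (l, val) \<in> dones s) \<ge> n - f\<rbrakk> \<Longrightarrow>
     istep n f i s (s\<lparr>decision := Some val\<rparr>) {}"

definition quiescent :: "nat \<Rightarrow> nat \<Rightarrow> nat \<Rightarrow> 'v pstate \<Rightarrow> bool" where
  "quiescent n f i s = (\<not> (\<exists>s' out. istep n f i s s' out))"

text \<open>Global configuration: local states and the set of sent messages
(sender, receiver, message).  Sent messages may be delivered at any time.\<close>
type_synonym 'v config = "(nat \<Rightarrow> 'v pstate) \<times> (nat \<times> nat \<times> 'v msg) set"

definition sends :: "nat \<Rightarrow> (nat \<times> 'v msg) set \<Rightarrow> (nat \<times> nat \<times> 'v msg) set" where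
  "sends i out = {(i, r, m) | r m. (r, m) \<in> out}"

definition init_config :: "nat \<Rightarrow> nat set \<Rightarrow> (nat \<Rightarrow> 'v) \<Rightarrow> 'v config" where
  "init_config n F x =
    ((\<lambda>i. fst (enter_view n (base_state (x i)) 0)),
     (\<Union>i \<in> parties n - F. sends i (snd (enter_view n (base_state (x i)) 0))))"

inductive reachable :: "nat \<Rightarrow> nat \<Rightarrow> nat set \<Rightarrow> (nat \<Rightarrow> 'v) \<Rightarrow> 'v config \<Rightarrow> bool"
  for n f F x where
  init: "reachable n f F x (init_config n F x)"
| byzantine:
    "\<lbrakk>reachable n f F x (ls, net); j \<in> F; r \<in> parties n\<rbrakk> \<Longrightarrow>
     reachable n f F x (ls, insert (j, r, m) net)"
| internal:
    "\<lbrakk>reachable n f F x (ls, net); i \<in> parties n - F; decision (ls i) = None;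
      istep n f i (ls i) s' out\<rbrakk> \<Longrightarrow>
     reachable n f F x (ls(i := s'), net \<union> sends i out)"
| delivery:
    "\<lbrakk>reachable n f F x (ls, net); i \<in> parties n - F; decision (ls i) = None;
      quiescent n f i (ls i); (j, i, m) \<in> net; deliver n f i j m (ls i) = (s', out)\<rbrakk> \<Longrightarrow>
     reachable n f F x (ls(i := s'), net \<union> sends i out)"
| timeout:
    "\<lbrakk>reachable n f F x (ls, net); i \<in> parties n - F; decision (ls i) = None;
      quiescent n f i (ls i); \<not> timer_fired (ls i)\<rbrakk> \<Longrightarrow>
     reachable n f F x (ls(i := (ls i)\<lparr>timer_fired := True\<rparr>),
                        net \<union> sends i (to_all n (Abort (view (ls i)))))"

end

theory Submission
  imports Defs
begin

definition echo_set :: "nat \<Rightarrow> 'v pstate \<Rightarrow> (nat \<times> nat \<times> 'v msg) set \<Rightarrow> int \<Rightarrow> 'v set" where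
  "echo_set i s net v = {a. (\<exists>r. (i, r, Echo a v) \<in> net) \<or>
     (view s = v \<and> (Echo a v \<in> join s \<or> echo_pending s = Some a))}"

definition inv_party :: "nat \<Rightarrow> nat \<Rightarrow> nat \<Rightarrow> 'v pstate \<Rightarrow> (nat \<times> nat \<times> 'v msg) set \<Rightarrow> bool" where
  "inv_party n f i s net \<longleftrightarrow>
   (\<forall>l m. (l, m) \<in> rcvd s \<longrightarrow> (l, i, m) \<in> net) \<and>
   (\<forall>a v. Echo a v \<in> join s \<longrightarrow> v = view s) \<and>
   (\<forall>a v r. (i, r, Echo a v) \<in> net \<longrightarrow> v \<le> view s) \<and>
   (\<forall>v a b. a \<in> echo_set i s net v \<longrightarrow> b \<in> echo_set i s net v \<longrightarrow> a = b) \<and>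
   (\<not> has_propose_from s (primary n (view s)) \<longrightarrow> echo_set i s net (view s) = {}) \<and>
   (\<forall>a v. Key1 a v \<in> join s \<longrightarrow> n - f \<le> count_parties n (\<lambda>l. (l, i, Echo a v) \<in> net)) \<and>
   (\<forall>a v r. (i, r, Key1 a v) \<in> net \<longrightarrow> n - f \<le> count_parties n (\<lambda>l. (l, i, Echo a v) \<in> net))"

definition relevant :: "'v msg \<Rightarrow> bool" where
  "relevant m \<longleftrightarrow> (\<exists>a v. m = Echo a v \<or> m = Key1 a v)"

lemma count_mono:
  assumes "\<And>l. l \<in> parties n \<Longrightarrow> P l \<Longrightarrow> Q l"
  shows "count_parties n P \<le> count_parties n Q"
  unfolding count_parties_def
  by (rule card_mono) (auto simp: parties_def assms)

lemma inv_net_mono: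
  assumes "inv_party n f i s net" "net \<subseteq> net'"
    and "\<And>r m. (i, r, m) \<in> net' \<Longrightarrow> (i, r, m) \<notin> net \<Longrightarrow> \<not> relevant m"
  shows "inv_party n f i s net'"
proof -
  have E: "echo_set i s net' v = echo_set i s net v" for v
    using assms(2,3) unfolding echo_set_def relevant_def by blast
  have C: "count_parties n (\<lambda>l. (l, i, Echo a v) \<in> net) \<le> count_parties n (\<lambda>l. (l, i, Echo a v) \<in> net')" for a v
    by (rule count_mono) (use assms(2) in blast)
  have K: "(i, r, Key1 a v) \<in> net" if "(i, r, Key1 a v) \<in> net'" for r a v
    using assms(3)[of r "Key1 a v"] that unfolding relevant_def by blast
  have Ec: "(i, r, Echo a v) \<in> net" if "(i, r, Echo a v) \<in> net'" for r a v
    using assms(3)[of r "Echo a v"] that unfolding relevant_def by blast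
  note I = assms(1)[unfolded inv_party_def]
  have p1: "\<forall>l m. (l, m) \<in> rcvd s \<longrightarrow> (l, i, m) \<in> net'" using I assms(2) by blast
  have p3: "\<forall>a v r. (i, r, Echo a v) \<in> net' \<longrightarrow> v \<le> view s" using I Ec by blast
  have p6: "\<forall>a v. Key1 a v \<in> join s \<longrightarrow> n - f \<le> count_parties n (\<lambda>l. (l, i, Echo a v) \<in> net')"
    using I C le_trans by meson
  have p7: "\<forall>a v r. (i, r, Key1 a v) \<in> net' \<longrightarrow> n - f \<le> count_parties n (\<lambda>l. (l, i, Echo a v) \<in> net')"
    using I C K le_trans by meson
  show ?thesis unfolding inv_party_def E using I p1 p3 p6 p7 by blast
qed

lemma inv_frame:
  assumes I: "inv_party n f i s net"
    and r: "rcvd s' = rcvd s" and jn: "\<And>m. relevant m \<Longrightarrow> m \<in> join s' \<longleftrightarrow> m \<in> join s"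
    and v: "view s' = view s" and e: "echo_pending s' = echo_pending s"
    and o: "\<And>r m. (r, m) \<in> out \<Longrightarrow> \<not> relevant m"
  shows "inv_party n f i s' (net \<union> sends i out)"
proof -
  have je: "Echo a w \<in> join s' \<longleftrightarrow> Echo a w \<in> join s" for a w
    using jn[of "Echo a w"] by (simp add: relevant_def)
  have jk: "Key1 a w \<in> join s' \<longleftrightarrow> Key1 a w \<in> join s" for a w
    using jn[of "Key1 a w"] by (simp add: relevant_def)
  have es: "echo_set i s' net w = echo_set i s net w" for w
    unfolding echo_set_def using je v e by simp
  have hp: "has_propose_from s' = has_propose_from s"
    unfolding has_propose_from_def[abs_def] r by simp
  have "inv_party n f i s' net"
    using I unfolding inv_party_def es hp r v je jk .
  then show ?thesis
    by (rule inv_net_mono) (auto simp: sends_def o)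
qed

lemma inv_istep:
  assumes I: "inv_party n f i s net" and st: "istep n f i s s' out"
  shows "inv_party n f i s' (net \<union> sends i out)"
  using st
proof (cases rule: istep.cases)
  case (suggest)
  show ?thesis unfolding suggest(1,2) by (rule inv_frame[OF I]) (auto simp: relevant_def)
next
  case (accept_suggestion j k3 v3)
  show ?thesis unfolding accept_suggestion(1,2) by (rule inv_frame[OF I]) (auto simp: relevant_def)
next
  case (propose j k w)
  show ?thesis unfolding propose(1,2) by (rule inv_frame[OF I]) (auto simp: relevant_def)
next
  case (pending_echo val)
  have es: "echo_set i s' net w = echo_set i s net w" for w
    using pending_echo unfolding echo_set_def by auto
  have hp: "has_propose_from s' = has_propose_from s"
    using pending_echo unfolding has_propose_from_def[abs_def] by simp
  note J = I[unfolded inv_party_def]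
  have "inv_party n f i s' net"
    unfolding inv_party_def es hp
  proof (intro conjI)
    show "\<forall>a v. Echo a v \<in> join s' \<longrightarrow> v = view s'"
      using J pending_echo by auto
    show "\<forall>a v. Key1 a v \<in> join s' \<longrightarrow> n - f \<le> count_parties n (\<lambda>l. (l, i, Echo a v) \<in> net)"
      using J pending_echo by auto
  qed (use J pending_echo in auto)
  then show ?thesis using pending_echo by (simp add: sends_def)
next
  case (key1_step val)
  have c: "count_parties n (\<lambda>l. (l, Echo val (view s)) \<in> rcvd s) \<le> count_parties n (\<lambda>l. (l, i, Echo val (view s)) \<in> net)"
    by (rule count_mono) (use I in \<open>auto simp: inv_party_def\<close>)
  then have c2: "n - f \<le> count_parties n (\<lambda>l. (l, i, Echo val (view s)) \<in> net)"
    using key1_step by linarith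
  have es: "echo_set i s' net w = echo_set i s net w" for w
    using key1_step unfolding echo_set_def by auto
  have hp: "has_propose_from s' = has_propose_from s"
    using key1_step unfolding has_propose_from_def[abs_def] by simp
  note J = I[unfolded inv_party_def]
  have "inv_party n f i s' net"
    unfolding inv_party_def es hp
  proof (intro conjI)
    show "\<forall>a v. Echo a v \<in> join s' \<longrightarrow> v = view s'"
      using J key1_step by auto
    show "\<forall>a v. Key1 a v \<in> join s' \<longrightarrow> n - f \<le> count_parties n (\<lambda>l. (l, i, Echo a v) \<in> net)"
      using J key1_step c2 by auto
  qed (use J key1_step in auto)
  then show ?thesis using key1_step by (simp add: sends_def)
next
  case (key2_step val)
  show ?thesis unfolding key2_step(1,2) by (rule inv_frame[OF I]) (auto simp: relevant_def)
next
  case (key3_step val)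
  show ?thesis unfolding key3_step(1,2) by (rule inv_frame[OF I]) (auto simp: relevant_def)
next
  case (lock_step val)
  show ?thesis unfolding lock_step(1,2) by (rule inv_frame[OF I]) (auto simp: relevant_def)
next
  case (lock_quorum_done val)
  show ?thesis unfolding lock_quorum_done(1,2) by (rule inv_frame[OF I]) (auto simp: relevant_def to_all_def)
next
  case (join_send m j)
  note J = I[unfolded inv_party_def]
  have es: "echo_set i s (net \<union> sends i out) w = echo_set i s net w" for w
    using join_send J unfolding echo_set_def sends_def by auto
  have cm: "count_parties n (\<lambda>l. (l, i, Echo a v) \<in> net) \<le> count_parties n (\<lambda>l. (l, i, Echo a v) \<in> net \<union> sends i out)" for a v
    by (rule count_mono) blast
  have "inv_party n f i s (net \<union> sends i out)"
    unfolding inv_party_def es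
  proof (intro conjI)
    show "\<forall>a v r. (i, r, Echo a v) \<in> net \<union> sends i out \<longrightarrow> v \<le> view s"
      using J join_send unfolding sends_def by fastforce
    show "\<forall>a v. Key1 a v \<in> join s \<longrightarrow> n - f \<le> count_parties n (\<lambda>l. (l, i, Echo a v) \<in> net \<union> sends i out)"
      using J cm le_trans by meson
    have "(i, r, Key1 a v) \<in> net \<or> Key1 a v \<in> join s" if "(i, r, Key1 a v) \<in> net \<union> sends i out" for r a v
      using that join_send unfolding sends_def by auto
    then show "\<forall>a v r. (i, r, Key1 a v) \<in> net \<union> sends i out \<longrightarrow> n - f \<le> count_parties n (\<lambda>l. (l, i, Echo a v) \<in> net \<union> sends i out)"
      using J cm le_trans by meson
  qed (use J join_send in \<open>auto simp: sends_def\<close>)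
  then have "inv_party n f i s' ((net \<union> sends i out) \<union> sends i {})"
    by (rule inv_frame) (auto simp: join_send(1))
  then show ?thesis by (simp add: sends_def)
next
  case (done_relay val)
  show ?thesis unfolding done_relay(1,2) by (rule inv_frame[OF I]) (auto simp: relevant_def to_all_def)
next
  case (decide val)
  show ?thesis unfolding decide(1,2) by (rule inv_frame[OF I]) (auto simp: relevant_def)
qed

lemma pvm_frame:
  assumes "\<not> (\<exists>a b g. m = Propose a b g)" and "process_view_msg n i j m s = (s1, out)"
  shows "out = {} \<and> rcvd s1 = rcvd s \<and> join s1 = join s \<and> view s1 = view s \<and> echo_pending s1 = echo_pending s"
  using assms by (cases m) (auto simp: Let_def split: if_splits)

lemma inv_rcvd:
  assumes I: "inv_party n f i s net" and jm: "(j, i, m) \<in> net"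
    and np: "\<not> (\<exists>a b g. m = Propose a b g)"
  shows "inv_party n f i (s\<lparr>rcvd := insert (j, m) (rcvd s)\<rparr>) net"
proof -
  have es: "echo_set i (s\<lparr>rcvd := insert (j, m) (rcvd s)\<rparr>) net w = echo_set i s net w" for w
    unfolding echo_set_def by simp
  have hp: "has_propose_from (s\<lparr>rcvd := insert (j, m) (rcvd s)\<rparr>) = has_propose_from s"
    using np unfolding has_propose_from_def[abs_def] by auto
  note J = I[unfolded inv_party_def]
  show ?thesis unfolding inv_party_def es hp
    using J jm by simp
qed

lemma inv_propose:
  assumes I: "inv_party n f i s net" and jm: "(j, i, Propose a b g) \<in> net"
    and g: "g = view s"
    and s': "s' = s1\<lparr>rcvd := insert (j, Propose a b g) (rcvd s1)\<rparr>"
    and r1: "rcvd s1 = rcvd s" and v1: "view s1 = view s"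
    and ch: "(join s1 = join s \<and> echo_pending s1 = echo_pending s) \<or>
      (j = primary n g \<and> \<not> has_propose_from s j \<and>
        ((join s1 = insert (Echo b g) (join s) \<and> echo_pending s1 = echo_pending s) \<or>
         (join s1 = join s \<and> echo_pending s1 = Some b)))"
  shows "inv_party n f i s' net"
proof -
  note J = I[unfolded inv_party_def]
  have hp: "has_propose_from s' l" if "has_propose_from s l" for l
    using that unfolding has_propose_from_def s' r1 by auto
  have hpj: "has_propose_from s' j"
    unfolding has_propose_from_def s' by auto
  have v': "view s' = view s" using s' v1 by simp
  have r': "rcvd s' = insert (j, Propose a b g) (rcvd s)" using s' r1 by simp
  have jo: "join s' = join s1" "echo_pending s' = echo_pending s1" using s' by simp_all
  have esw: "echo_set i s' net w = echo_set i s net w" if "w \<noteq> view s" for w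
    unfolding echo_set_def v' using that by simp
  have es_sub: "echo_set i s' net (view s) \<subseteq> echo_set i s net (view s) \<union> {b}"
    unfolding echo_set_def v' jo using ch g by auto
  have es_eq: "echo_set i s' net (view s) = echo_set i s net (view s)"
    if "join s1 = join s \<and> echo_pending s1 = echo_pending s"
    unfolding echo_set_def v' jo using that by simp
  have p4: "\<forall>w a c. a \<in> echo_set i s' net w \<longrightarrow> c \<in> echo_set i s' net w \<longrightarrow> a = c"
  proof (intro allI impI)
    fix w a c assume a: "a \<in> echo_set i s' net w" and c: "c \<in> echo_set i s' net w"
    show "a = c"
    proof (cases "w = view s")
      case False then show ?thesis using a c esw J by metis
    next
      case True
      show ?thesis
      proof (cases "join s1 = join s \<and> echo_pending s1 = echo_pending s")
        case True
        then show ?thesis using a c es_eq J \<open>w = view s\<close> by metis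
      next
        case False
        then have "j = primary n (view s)" "\<not> has_propose_from s j" using ch g by auto
        then have "echo_set i s net (view s) = {}" using J by auto
        then show ?thesis using a c es_sub True by auto
      qed
    qed
  qed
  have p5: "\<not> has_propose_from s' (primary n (view s')) \<longrightarrow> echo_set i s' net (view s') = {}"
  proof
    assume nh: "\<not> has_propose_from s' (primary n (view s'))"
    then have "j \<noteq> primary n (view s)" using hpj v' by auto
    then have e: "join s1 = join s \<and> echo_pending s1 = echo_pending s" using ch g by auto
    have "\<not> has_propose_from s (primary n (view s))" using nh hp v' by auto
    then show "echo_set i s' net (view s') = {}" using J es_eq[OF e] v' by simp
  qed
  have p2: "\<forall>a v. Echo a v \<in> join s' \<longrightarrow> v = view s'"
    using J ch g v' jo by auto
  have p6: "\<forall>a v. Key1 a v \<in> join s' \<longrightarrow> n - f \<le> count_parties n (\<lambda>l. (l, i, Echo a v) \<in> net)"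
    using J ch jo by auto
  show ?thesis unfolding inv_party_def
    using J p2 p4 p5 p6 v' r' jm by auto
qed

lemma inv_enter:
  assumes I: "inv_party n f i s net" and w: "view s < w"
  shows "inv_party n f i (fst (enter_view n s w)) net"
proof -
  note J = I[unfolded inv_party_def]
  let ?t = "fst (enter_view n s w)"
  have t: "view ?t = w" "rcvd ?t = {}" "join ?t = {Proof (key1 s) (key1_val s) (prev_key1 s) w}"
    "echo_pending ?t = None"
    by (simp_all add: enter_view_def)
  have es: "echo_set i ?t net u \<subseteq> echo_set i s net u" for u
    unfolding echo_set_def t by auto
  have J3: "\<forall>a v r. (i, r, Echo a v) \<in> net \<longrightarrow> v \<le> view s" using J by blast
  have nE: "(i, r, Echo a w) \<notin> net" for r a using J3 w by force
  have es2: "echo_set i ?t net w = {}"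
    unfolding echo_set_def t using nE by simp
  have p4: "\<forall>u a c. a \<in> echo_set i ?t net u \<longrightarrow> c \<in> echo_set i ?t net u \<longrightarrow> a = c"
    using J es by blast
  have p3: "\<forall>a v r. (i, r, Echo a v) \<in> net \<longrightarrow> v \<le> view ?t"
    using J3 w unfolding t by force
  show ?thesis unfolding inv_party_def
    using J p3 p4 es2 unfolding t by simp
qed

lemma pvm_propose:
  assumes "process_view_msg n i j (Propose a b g) s = (s1, o1)"
  shows "o1 = {} \<and> rcvd s1 = rcvd s \<and> view s1 = view s \<and>
      ((join s1 = join s \<and> echo_pending s1 = echo_pending s) \<or>
      (j = primary n g \<and> \<not> has_propose_from s j \<and>
        ((join s1 = insert (Echo b g) (join s) \<and> echo_pending s1 = echo_pending s) \<or>
         (join s1 = join s \<and> echo_pending s1 = Some b))))"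
  using assms by (auto split: if_splits)

lemma inv_deliver:
  assumes I: "inv_party n f i s net" and jm: "(j, i, m) \<in> net"
    and d: "deliver n f i j m s = (s', out)"
  shows "inv_party n f i s' (net \<union> sends i out)"
proof (cases "\<exists>v. m = Request v")
  case True
  then obtain v where m: "m = Request v" by blast
  have "s' = s\<lparr>hreq := (hreq s)(j := max (hreq s j) v)\<rparr> \<and> out = {}" using d unfolding m deliver_def by simp
  then show ?thesis by (auto intro!: inv_frame[OF I] simp: relevant_def)
next
  case nR: False
  show ?thesis
  proof (cases "\<exists>v. m = Done v")
    case True
    then obtain v where m: "m = Done v" by blast
    have "s' = s\<lparr>dones := insert (j, v) (dones s)\<rparr> \<and> out = {}" using d unfolding m deliver_def by simp
    then show ?thesis by (auto intro!: inv_frame[OF I] simp: relevant_def)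
  next
    case nD: False
    show ?thesis
    proof (cases "\<exists>v. m = Abort v")
      case True
      then obtain v where m: "m = Abort v" by blast
      have st0: "s' = s \<or> (\<exists>h. s' = s\<lparr>habort := h\<rparr>) \<or> (\<exists>h w. view s \<le> w \<and> s' = fst (enter_view n (s\<lparr>habort := h\<rparr>) (w + 1)))"
        using d unfolding m deliver_def Let_def by (auto split: if_splits)
      have st: "(\<exists>h. s' = s\<lparr>habort := h\<rparr>) \<or> (\<exists>h w. view s \<le> w \<and> s' = fst (enter_view n (s\<lparr>habort := h\<rparr>) (w + 1)))"
        using st0 by (metis pstate.update_convs(14) pstate.surjective)
      have ou: "\<not> relevant m'" if "(r, m') \<in> out" for r m'
        using d that unfolding m deliver_def Let_def enter_view_def to_all_def relevant_def by (auto split: if_splits)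
      from st show ?thesis
      proof
        assume "\<exists>h. s' = s\<lparr>habort := h\<rparr>"
        then obtain h where "s' = s\<lparr>habort := h\<rparr>" by blast
        then show ?thesis by (auto intro!: inv_frame[OF I] ou)
      next
        assume "\<exists>h w. view s \<le> w \<and> s' = fst (enter_view n (s\<lparr>habort := h\<rparr>) (w + 1))"
        then obtain h w where hw: "view s \<le> w" "s' = fst (enter_view n (s\<lparr>habort := h\<rparr>) (w + 1))" by blast
        have "inv_party n f i (s\<lparr>habort := h\<rparr>) (net \<union> sends i {})"
          by (rule inv_frame[OF I]) auto
        then have "inv_party n f i (s\<lparr>habort := h\<rparr>) net" by (simp add: sends_def)
        then have "inv_party n f i s' net"
          unfolding hw(2) by (rule inv_enter) (use hw(1) in simp)
        then show ?thesis
          by (rule inv_net_mono) (auto simp: sends_def ou)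
      qed
    next
      case nA: False
      show ?thesis
      proof (cases "\<exists>a b g. m = Propose a b g")
        case True
        then obtain a b g where m: "m = Propose a b g" by blast
        show ?thesis
        proof (cases "g = view s")
          case False
          then have "s' = s \<and> out = {}" using d unfolding m deliver_def by simp
          then show ?thesis using I by (simp add: sends_def)
        next
          case True
          obtain s1 o1 where p: "process_view_msg n i j (Propose a b g) s = (s1, o1)" by fastforce
          note pp = pvm_propose[OF p]
          have so: "s' = s1\<lparr>rcvd := insert (j, Propose a b g) (rcvd s1)\<rparr> \<and> out = {}"
            using d True p pp unfolding m deliver_def by simp
          have "inv_party n f i s' net"
            by (rule inv_propose[where ?s1.0=s1, OF I jm[unfolded m] True]) (use so pp in auto)
          then show ?thesis using so by (simp add: sends_def)
        qed
      next
        case nP: False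
        have dd: "deliver n f i j m s = (if msg_view m = Some (view s)
          then (let (s1, out) = process_view_msg n i j m s
                in (s1\<lparr>rcvd := insert (j, m) (rcvd s1)\<rparr>, out))
          else (s, {}))"
          using nR nD nA by (cases m) (simp_all add: deliver_def del: process_view_msg.simps msg_view.simps)
        show ?thesis
        proof (cases "msg_view m = Some (view s)")
          case False
          then have "s' = s" "out = {}" using d dd by auto
          then show ?thesis using I by (simp add: sends_def)
        next
          case True
          obtain s1 o1 where p: "process_view_msg n i j m s = (s1, o1)" by fastforce
          have fr: "o1 = {} \<and> rcvd s1 = rcvd s \<and> join s1 = join s \<and> view s1 = view s \<and> echo_pending s1 = echo_pending s"
            by (rule pvm_frame[OF nP p])
          have so: "s' = s1\<lparr>rcvd := insert (j, m) (rcvd s1)\<rparr>" "out = {}"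
            using d dd True p fr by auto
          have "inv_party n f i s1 (net \<union> sends i {})"
            by (rule inv_frame[OF I]) (use fr in auto)
          then have "inv_party n f i s1 net" by (simp add: sends_def)
          then have "inv_party n f i (s1\<lparr>rcvd := insert (j, m) (rcvd s1)\<rparr>) net"
            by (rule inv_rcvd[OF _ jm nP])
          then show ?thesis using so by (simp add: sends_def)
        qed
      qed
    qed
  qed
qed


lemma inv_init:
  assumes "i \<in> parties n - F"
  shows "inv_party n f i (fst (init_config n F x) i) (snd (init_config n F x))"
proof -
  let ?s = "fst (init_config n F x) i"
  let ?net = "snd (init_config n F x)"
  have t: "view ?s = 0" "rcvd ?s = {}" "join ?s = {Proof (key1 (base_state (x i))) (key1_val (base_state (x i))) (prev_key1 (base_state (x i))) 0}"
    "echo_pending ?s = None"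
    by (simp_all add: init_config_def enter_view_def)
  have nr: "\<not> relevant m" if "(k, r, m) \<in> ?net" for k r m
    using that by (auto simp: init_config_def enter_view_def sends_def to_all_def relevant_def)
  have nE: "(k, r, Echo a v) \<notin> ?net" "(k, r, Key1 a v) \<notin> ?net" for k r a v
    using nr[of k r "Echo a v"] nr[of k r "Key1 a v"] by (auto simp: relevant_def)
  have es: "echo_set i ?s ?net v = {}" for v
    unfolding echo_set_def t using nE by simp
  show ?thesis unfolding inv_party_def es t using nE by simp
qed

lemma reach_inv:
  assumes "reachable n f F x c"
  shows "\<forall>i \<in> parties n - F. inv_party n f i (fst c i) (snd c)"
  using assms
proof induction
  case init
  then show ?case using inv_init by blast
next
  case (byzantine ls net j r m)
  show ?case
  proof
    fix i assume i: "i \<in> parties n - F"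
    have "inv_party n f i (ls i) net" using byzantine.IH i by simp
    then have "inv_party n f i (ls i) (insert (j, r, m) net)"
      by (rule inv_net_mono) (use i byzantine.hyps in auto)
    then show "inv_party n f i (fst (ls, insert (j, r, m) net) i) (snd (ls, insert (j, r, m) net))" by simp
  qed
next
  case (internal ls net i s' out)
  show ?case
  proof
    fix k assume k: "k \<in> parties n - F"
    have I: "inv_party n f k (ls k) net" using internal.IH k by simp
    show "inv_party n f k (fst (ls(i := s'), net \<union> sends i out) k) (snd (ls(i := s'), net \<union> sends i out))"
    proof (cases "k = i")
      case True
      then show ?thesis using inv_istep[OF _ internal.hyps(4)] I by simp
    next
      case False
      have "inv_party n f k (ls k) (net \<union> sends i out)"
        by (rule inv_net_mono[OF I]) (use False in \<open>auto simp: sends_def\<close>)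
      then show ?thesis using False by simp
    qed
  qed
next
  case (delivery ls net i j m s' out)
  show ?case
  proof
    fix k assume k: "k \<in> parties n - F"
    have I: "inv_party n f k (ls k) net" using delivery.IH k by simp
    show "inv_party n f k (fst (ls(i := s'), net \<union> sends i out) k) (snd (ls(i := s'), net \<union> sends i out))"
    proof (cases "k = i")
      case True
      then show ?thesis using inv_deliver[OF _ delivery.hyps(5) delivery.hyps(6)] I by simp
    next
      case False
      have "inv_party n f k (ls k) (net \<union> sends i out)"
        by (rule inv_net_mono[OF I]) (use False in \<open>auto simp: sends_def\<close>)
      then show ?thesis using False by simp
    qed
  qed
next
  case (timeout ls net i)
  show ?case
  proof
    fix k assume k: "k \<in> parties n - F"
    have I: "inv_party n f k (ls k) net" using timeout.IH k by simp
    let ?o = "to_all n (Abort (view (ls i)))"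
    show "inv_party n f k (fst (ls(i := (ls i)\<lparr>timer_fired := True\<rparr>), net \<union> sends i ?o) k) (snd (ls(i := (ls i)\<lparr>timer_fired := True\<rparr>), net \<union> sends i ?o))"
    proof (cases "k = i")
      case True
      have "inv_party n f i ((ls i)\<lparr>timer_fired := True\<rparr>) (net \<union> sends i ?o)"
        by (rule inv_frame) (use I True in \<open>auto simp: to_all_def relevant_def\<close>)
      then show ?thesis using True by simp
    next
      case False
      have "inv_party n f k (ls k) (net \<union> sends i ?o)"
        by (rule inv_net_mono[OF I]) (use False in \<open>auto simp: sends_def\<close>)
      then show ?thesis using False by simp
    qed
  qed
qed

theorem lemma2p3:
  fixes n f :: nat and F :: "nat set" and x :: "nat \<Rightarrow> 'v"
    and ls :: "nat \<Rightarrow> 'v pstate" and net :: "(nat \<times> nat \<times> 'v msg) set"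
  assumes "3 * f < n"
    and "F \<subseteq> parties n" and "card F \<le> f"
    and "reachable n f F x (ls, net)"
    and "i \<in> parties n - F" and "j \<in> parties n - F"
    and "(i, r, Key1 val v) \<in> net" and "(j, r', Key1 val' v) \<in> net"
  shows "val = val'"
proof -
  have R: "\<forall>k \<in> parties n - F. inv_party n f k (ls k) net"
    using reach_inv[OF assms(4)] by simp
  have Ii: "inv_party n f i (ls i) net" and Ij: "inv_party n f j (ls j) net"
    using R assms(5,6) by auto
  define Q1 where "Q1 = {l \<in> parties n. (l, i, Echo val v) \<in> net}"
  define Q2 where "Q2 = {l \<in> parties n. (l, j, Echo val' v) \<in> net}"
  have c1: "n - f \<le> card Q1"
    using Ii assms(7) unfolding inv_party_def Q1_def count_parties_def by blast
  have c2: "n - f \<le> card Q2"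
    using Ij assms(8) unfolding inv_party_def Q2_def count_parties_def by blast
  have fin: "finite (parties n)" "card (parties n) = n" by (simp_all add: parties_def)
  have sub: "Q1 \<subseteq> parties n" "Q2 \<subseteq> parties n" by (auto simp: Q1_def Q2_def)
  have fq: "finite Q1" "finite Q2" using sub fin finite_subset by auto
  have "card (Q1 \<union> Q2) \<le> n" using sub fin by (metis card_mono le_sup_iff)
  moreover have "card Q1 + card Q2 = card (Q1 \<union> Q2) + card (Q1 \<inter> Q2)"
    using card_Un_Int fq by blast
  ultimately have "card (Q1 \<inter> Q2) > f" using c1 c2 assms(1) by linarith
  then have "\<not> Q1 \<inter> Q2 \<subseteq> F"
    using assms(2,3) fin by (metis card_mono finite_subset le_trans not_le)
  then obtain l where l: "l \<in> Q1" "l \<in> Q2" "l \<notin> F" by blast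
  have lp: "l \<in> parties n - F" using l sub by auto
  have Il: "inv_party n f l (ls l) net" using R lp by auto
  have "val \<in> echo_set l (ls l) net v" "val' \<in> echo_set l (ls l) net v"
    using l unfolding echo_set_def Q1_def Q2_def by auto
  then show ?thesis using Il unfolding inv_party_def by blast
qed

end
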